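(* Let $M$ be a $\lambda$-term and $\vec x$ a list of $n$ distinct variables with $FV(M)\subseteq\vec x$. If $M$ is head-normalizable, then $\llbracket M\rrbracket_{\vec x}$ is not the zero distributor, i.e. $\llbracket M\rrbracket_{\vec x}(\Delta,a)\neq\emptyset$ for some $\Delta\in(SD)^n$, $a\in D$.
   Context: A $\lambda$-term is in head-normal form if it has the shape $\lambda y_1\dots\lambda y_m.\,y\,Q_1\cdots Q_p$; it is head-normalizable if it $\beta$-reduces to a head-normal form. $[n]=\{1,\dots,n\}$. Fix a class $\mathcal C$ of functions between finite ordinals equal to one of: all bijections, all injections, all surjections, all functions. For a small category $X$, $SX$ has finite lists of objects of $X$ as objects and morphisms $\langle x_1,\dots,x_n\rangle\to\langle y_1,\dots,y_m\rangle$ the tuples $\langle\alpha,f_1,\dots,f_m\rangle$ with $\alpha:[m]\to[n]$ in $\mathcal C$, $f_i:x_{\alpha(i)}\to y_i$; composite of $\langle\alpha,\vec f\rangle$ then $\langle\beta,\vec g\rangle$ is $\langle\alpha\circ\beta,(g_i\circ f_{\beta(i)})_i\rangle$; tensor $\oplus$ = concatenation, unit $\langle\rangle$. Fix a small category $A$. $D=D_A$ is the colimit of $D_0=A$, $D_{k+1}=(SD_k)^{o}\times D_k\sqcup A$ along canonical inclusions: objects $a::=o\mid\vec a\Rightarrow a$ ($o\in\mathrm{Ob}(A)$); morphisms are those of $A$ and $\langle\alpha,\vec f\rangle\Rightarrow f:(\vec a\Rightarrow a)\to(\vec a'\Rightarrow a')$ for $\langle\alpha,\vec f\rangle:\vec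 a'\to\vec a$ in $SD$, $f:a\to a'$. $SD=S(D_A)$. Contexts are objects of $(SD)^n$; $\otimes$ is componentwise concatenation; $\Delta\oplus\langle\vec a\rangle$ appends a component. Denotation $\llbracket M\rrbracket_{\vec x}:((SD)^n)^{o}\times D\to\mathrm{Set}$ for $\vec x=\langle x_1..x_n\rangle\supseteq FV(M)$ (functorial action from hom-functors and coends): $\llbracket x_i\rrbracket_{\vec x}(\Delta,a)=(SD)^n(\Delta,\langle\langle\rangle,\dots,\langle a\rangle,\dots,\langle\rangle\rangle)$ ($\langle a\rangle$ at position $i$); $\llbracket\lambda y.P\rrbracket_{\vec x}(\Delta,a)=\llbracket P\rrbracket_{\vec x\oplus\langle y\rangle}(\Delta\oplus\langle\vec a'\rangle,a')$ if $a=\vec a'\Rightarrow a'$, $\emptyset$ if $a$ atomic; $\llbracket PQ\rrbracket_{\vec x}(\Delta,a)=\int^{\vec a=\langle a_1..a_k\rangle\in SD}\int^{\Gamma_0..\Gamma_k\in(SD)^n}\llbracket P\rrbracket_{\vec x}(\Gamma_0,\vec a\Rightarrow a)\times\prod_{i=1}^k\llbracket Q\rrbracket_{\vec x}(\Gamma_i,a_i)\times(SD)^n(\Delta,\bigotimes_{i=0}^k\Gamma_i)$. *)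

theory Defs
  imports Main
begin

section \<open>Untyped lambda-terms (de Bruijn) and head normalization\<close>

datatype dB = Var nat | App dB dB | Abs dB

fun db_lift :: "dB \<Rightarrow> nat \<Rightarrow> dB" where
  "db_lift (Var i) k = (if i < k then Var i else Var (Suc i))"
| "db_lift (App s t) k = App (db_lift s k) (db_lift t k)"
| "db_lift (Abs s) k = Abs (db_lift s (Suc k))"

fun db_subst :: "dB \<Rightarrow> dB \<Rightarrow> nat \<Rightarrow> dB" where
  "db_subst (Var i) s k = (if k < i then Var (i - 1) else if i = k then s else Var i)"
| "db_subst (App t u) s k = App (db_subst t s k) (db_subst u s k)"
| "db_subst (Abs t) s k = Abs (db_subst t (db_lift s 0) (Suc k))"

inductive beta :: "dB \<Rightarrow> dB \<Rightarrow> bool" where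
  beta_redex: "beta (App (Abs s) t) (db_subst s t 0)"
| beta_appL: "beta s t \<Longrightarrow> beta (App s u) (App t u)"
| beta_appR: "beta s t \<Longrightarrow> beta (App u s) (App u t)"
| beta_abs: "beta s t \<Longrightarrow> beta (Abs s) (Abs t)"

definition is_hnf :: "dB \<Rightarrow> bool" where
  "is_hnf N \<longleftrightarrow> (\<exists>m i Qs. N = (Abs ^^ m) (foldl App (Var i) Qs))"

definition head_normalizable :: "dB \<Rightarrow> bool" where
  "head_normalizable M \<longleftrightarrow> (\<exists>N. beta\<^sup>*\<^sup>* M N \<and> is_hnf N)"

text \<open>All free (loose) de Bruijn indices of the term are below \<open>k\<close>,
  i.e. \<open>FV(M) \<subseteq> x1..xk\<close> for a list of k distinct variables.\<close>
fun closedn :: "nat \<Rightarrow> dB \<Rightarrow> bool" where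
  "closedn k (Var i) = (i < k)"
| "closedn k (App s t) = (closedn k s \<and> closedn k t)"
| "closedn k (Abs s) = closedn (Suc k) s"

section \<open>The small category A and the class C\<close>

record ('o, 'm) cat =
  cat_hom :: "'o \<Rightarrow> 'o \<Rightarrow> 'm set"
  cat_id :: "'o \<Rightarrow> 'm"
  cat_comp :: "'m \<Rightarrow> 'm \<Rightarrow> 'm"   \<comment> \<open>\<open>cat_comp g f = g \<circ> f\<close>\<close>

definition is_category :: "('o, 'm) cat \<Rightarrow> bool" where
  "is_category A \<longleftrightarrow>
     (\<forall>x. cat_id A x \<in> cat_hom A x x) \<and>
     (\<forall>x y z f g. f \<in> cat_hom A x y \<longrightarrow> g \<in> cat_hom A y z \<longrightarrow> cat_comp A g f \<in> cat_hom A x z) \<and>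
     (\<forall>x y f. f \<in> cat_hom A x y \<longrightarrow> cat_comp A f (cat_id A x) = f \<and> cat_comp A (cat_id A y) f = f) \<and>
     (\<forall>w x y z f g h. f \<in> cat_hom A w x \<longrightarrow> g \<in> cat_hom A x y \<longrightarrow> h \<in> cat_hom A y z \<longrightarrow>
        cat_comp A h (cat_comp A g f) = cat_comp A (cat_comp A h g) f)"

text \<open>The class \<open>\<C>\<close>; a map \<open>\<alpha> : [m] \<rightarrow> [n]\<close> is the list \<open>[\<alpha>(1)-1,...,\<alpha>(m)-1]\<close>
  (0-based, entries < n).\<close>
datatype fclass = CBij | CInj | CSurj | CAll

definition inclass :: "fclass \<Rightarrow> nat \<Rightarrow> nat list \<Rightarrow> bool" where
  "inclass c n \<alpha> = (set \<alpha> \<subseteq> {..<n} \<and>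
     (case c of CBij \<Rightarrow> distinct \<alpha> \<and> set \<alpha> = {..<n}
              | CInj \<Rightarrow> distinct \<alpha>
              | CSurj \<Rightarrow> set \<alpha> = {..<n}
              | CAll \<Rightarrow> True))"

section \<open>The category D = D_A and SD\<close>

datatype 'o dob = Atm 'o | Arr "'o dob list" "'o dob"

text \<open>\<open>MArr \<alpha> fs f\<close> is the morphism \<open>\<langle>\<alpha>,fs\<rangle> \<Rightarrow> f\<close>.\<close>
datatype 'm dmor = MAt 'm | MArr "nat list" "'m dmor list" "'m dmor"

type_synonym 'm smor = "nat list \<times> 'm dmor list"
type_synonym 'o ctx = "'o dob list list"
type_synonym 'm cmor = "'m smor list"

text \<open>For arrow objects,
  \<open>\<langle>\<alpha>,fs\<rangle> \<Rightarrow> f : (as \<Rightarrow> a) \<rightarrow> (bs \<Rightarrow> b)\<close> with \<open>\<langle>\<alpha>,fs\<rangle> : bs \<rightarrow> as\<close> in SD.\<close>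
inductive dhom :: "('o, 'm) cat \<Rightarrow> fclass \<Rightarrow> 'o dob \<Rightarrow> 'o dob \<Rightarrow> 'm dmor \<Rightarrow> bool"
  for A C where
  dhom_at: "m \<in> cat_hom A x y \<Longrightarrow> dhom A C (Atm x) (Atm y) (MAt m)"
| dhom_arr: "length \<alpha> = length as \<Longrightarrow> length fs = length as \<Longrightarrow> inclass C (length bs) \<alpha> \<Longrightarrow>
     (\<forall>i<length as. dhom A C (bs ! (\<alpha> ! i)) (as ! i) (fs ! i)) \<Longrightarrow>
     dhom A C a b f \<Longrightarrow> dhom A C (Arr as a) (Arr bs b) (MArr \<alpha> fs f)"

text \<open>Morphisms of SD: \<open>\<langle>\<alpha>,fs\<rangle> : xs \<rightarrow> ys\<close>, \<open>\<alpha> : [|ys|] \<rightarrow> [|xs|]\<close>, \<open>fs_i : xs_{\<alpha> i} \<rightarrow> ys_i\<close>.\<close>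
definition shom :: "('o, 'm) cat \<Rightarrow> fclass \<Rightarrow> 'o dob list \<Rightarrow> 'o dob list \<Rightarrow> 'm smor \<Rightarrow> bool" where
  "shom A C xs ys m \<longleftrightarrow> length (fst m) = length ys \<and> length (snd m) = length ys \<and>
     inclass C (length xs) (fst m) \<and>
     (\<forall>i<length ys. dhom A C (xs ! (fst m ! i)) (ys ! i) (snd m ! i))"

definition ctxhom :: "('o, 'm) cat \<Rightarrow> fclass \<Rightarrow> nat \<Rightarrow> 'o ctx \<Rightarrow> 'o ctx \<Rightarrow> 'm cmor \<Rightarrow> bool" where
  "ctxhom A C n \<Delta> \<Gamma> h \<longleftrightarrow> length \<Delta> = n \<and> length \<Gamma> = n \<and> length h = n \<and>
     (\<forall>l<n. shom A C (\<Delta> ! l) (\<Gamma> ! l) (h ! l))"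

fun did :: "('o, 'm) cat \<Rightarrow> 'o dob \<Rightarrow> 'm dmor" where
  "did A (Atm x) = MAt (cat_id A x)"
| "did A (Arr as a) = MArr [0..<length as] (map (did A) as) (did A a)"

definition sid :: "('o, 'm) cat \<Rightarrow> 'o dob list \<Rightarrow> 'm smor" where
  "sid A xs = ([0..<length xs], map (did A) xs)"

text \<open>Composition in D: \<open>dcomp A g f = g \<circ> f\<close>.\<close>
function dcomp :: "('o, 'm) cat \<Rightarrow> 'm dmor \<Rightarrow> 'm dmor \<Rightarrow> 'm dmor" where
  "dcomp A (MAt g) (MAt f) = MAt (cat_comp A g f)"
| "dcomp A (MArr \<beta> gs g) (MArr \<alpha> fs f) =
     MArr (map (\<lambda>j. \<beta> ! j) \<alpha>)
       (map (\<lambda>i. if i < length fs \<and> \<alpha> ! i < length gs then dcomp A (fs ! i) (gs ! (\<alpha> ! i)) else undefined)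
          [0..<length \<alpha>])
       (dcomp A g f)"
| "dcomp A (MAt g) (MArr \<alpha> fs f) = undefined"
| "dcomp A (MArr \<beta> gs g) (MAt f) = undefined"
  by pat_completeness auto
termination
proof (relation "measure (\<lambda>(A, g, f). size g + size f)")
  show "wf (measure (\<lambda>(A, g, f). size g + size f))" by simp
next
  fix A :: "('o,'m) cat" and \<beta> \<alpha> :: "nat list" and gs fs :: "'m dmor list" and g f :: "'m dmor" and i :: nat
  assume "i \<in> set [0..<length \<alpha>]" "i < length fs \<and> \<alpha> ! i < length gs"
  then have "size (fs ! i) < Suc (size_list size fs + size f)"
     "size (gs ! (\<alpha> ! i)) < Suc (size_list size gs + size g)"
    by (auto intro!: le_imp_less_Suc trans_le_add1 size_list_estimation' nth_mem)
  then show "((A, fs ! i, gs ! (\<alpha> ! i)), A, MArr \<beta> gs g, MArr \<alpha> fs f)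
      \<in> measure (\<lambda>(A, g, f). size g + size f)" by simp
qed auto

text \<open>Composition in SD, diagrammatic: \<open>\<langle>\<alpha>,f\<rangle>\<close> then \<open>\<langle>\<beta>,g\<rangle>\<close> is \<open>\<langle>\<alpha>\<circ>\<beta>, (g_i \<circ> f_{\<beta> i})_i\<rangle>\<close>.\<close>
definition scomp :: "('o, 'm) cat \<Rightarrow> 'm smor \<Rightarrow> 'm smor \<Rightarrow> 'm smor" where
  "scomp A m1 m2 = (map (\<lambda>j. fst m1 ! j) (fst m2),
      map (\<lambda>i. dcomp A (snd m2 ! i) (snd m1 ! (fst m2 ! i))) [0..<length (fst m2)])"

definition ccomp :: "('o, 'm) cat \<Rightarrow> 'm cmor \<Rightarrow> 'm cmor \<Rightarrow> 'm cmor" where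
  "ccomp A g h = map2 (scomp A) g h"

text \<open>Tensor (concatenation) of SD-morphisms, given the lengths of their sources.\<close>
definition stens :: "nat list \<Rightarrow> 'm smor list \<Rightarrow> 'm smor" where
  "stens lens ms = (concat (map (\<lambda>i. map (\<lambda>j. j + sum_list (take i lens)) (fst (ms ! i))) [0..<length ms]),
                    concat (map snd ms))"

definition ctens :: "nat \<Rightarrow> 'o ctx list \<Rightarrow> 'o ctx" where
  "ctens n Gs = map (\<lambda>l. concat (map (\<lambda>G. G ! l) Gs)) [0..<n]"

definition ctens_mor :: "nat \<Rightarrow> 'o ctx list \<Rightarrow> 'm cmor list \<Rightarrow> 'm cmor" where
  "ctens_mor n Gs gs = map (\<lambda>l. stens (map (\<lambda>G. length (G ! l)) Gs) (map (\<lambda>g. g ! l) gs)) [0..<n]"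

text \<open>\<open>\<langle>\<langle>\<rangle>,...,\<langle>a\<rangle>,...,\<langle>\<rangle>\<rangle>\<close> with \<open>\<langle>a\<rangle>\<close> at (0-based) position p, and its action on morphisms.\<close>
definition iota :: "nat \<Rightarrow> nat \<Rightarrow> 'o dob \<Rightarrow> 'o ctx" where
  "iota n p a = map (\<lambda>l. if l = p then [a] else []) [0..<n]"

definition iota_mor :: "nat \<Rightarrow> nat \<Rightarrow> 'm dmor \<Rightarrow> 'm cmor" where
  "iota_mor n p f = map (\<lambda>l. if l = p then ([0], [f]) else ([], [])) [0..<n]"

text \<open>The structural morphism \<open>\<Gamma>_0 \<otimes> \<Gamma>_1 \<otimes> ... \<otimes> \<Gamma>_k \<rightarrow> \<Gamma>_0 \<otimes> \<Gamma>_{\<alpha>(1)} \<otimes> ... \<otimes> \<Gamma>_{\<alpha>(m)}\<close>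
  of \<open>(SD)^n\<close> induced by \<open>\<alpha> : [m] \<rightarrow> [k]\<close>.\<close>
definition sigma :: "('o, 'm) cat \<Rightarrow> nat \<Rightarrow> 'o ctx list \<Rightarrow> nat list \<Rightarrow> 'm cmor" where
  "sigma A n Gs \<alpha> = map (\<lambda>l. let Ls = map (\<lambda>G. G ! l) Gs; bs = 0 # map Suc \<alpha> in
       (concat (map (\<lambda>b. map (\<lambda>t. sum_list (map length (take b Ls)) + t) [0..<length (Ls ! b)]) bs),
        map (did A) (concat (map (\<lambda>b. Ls ! b) bs)))) [0..<n]"

section \<open>The denotation\<close>

text \<open>Representatives of elements of the denotation (before taking the coend quotients).
  \<open>RApp as Gs p qs h\<close> stands for the element \<open>(p, q_1..q_k, h)\<close> of the integrand at
  \<open>\<vec>a = as\<close>, \<open>\<Gamma>_0..\<Gamma>_k = Gs\<close>.\<close>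
datatype ('o, 'm) raw =
    RVar "'m cmor"
  | RApp "'o dob list" "'o ctx list" "('o, 'm) raw" "('o, 'm) raw list" "'m cmor"

text \<open>Functorial action in the context (contravariant): along \<open>g : \<Delta>' \<rightarrow> \<Delta>\<close>,
  maps \<open>[[M]](\<Delta>,a)\<close> to \<open>[[M]](\<Delta>',a)\<close>.\<close>
fun act_ctx :: "('o, 'm) cat \<Rightarrow> dB \<Rightarrow> 'o dob \<Rightarrow> 'm cmor \<Rightarrow> ('o, 'm) raw \<Rightarrow> ('o, 'm) raw" where
  "act_ctx A (Var k) a g x = (case x of RVar h \<Rightarrow> RVar (ccomp A g h) | _ \<Rightarrow> x)"
| "act_ctx A (Abs P) a g x = (case a of Arr as b \<Rightarrow> act_ctx A P b (g @ [sid A as]) x | Atm _ \<Rightarrow> x)"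
| "act_ctx A (App P Q) a g x =
     (case x of RApp bs Gs p qs h \<Rightarrow> RApp bs Gs p qs (ccomp A g h) | _ \<Rightarrow> x)"

text \<open>Functorial action in the type (covariant): along \<open>f : a \<rightarrow> b\<close> in D,
  maps \<open>[[M]](\<Delta>,a)\<close> to \<open>[[M]](\<Delta>,b)\<close>.\<close>
fun act_ty :: "('o, 'm) cat \<Rightarrow> dB \<Rightarrow> nat \<Rightarrow> 'o ctx \<Rightarrow> 'o dob \<Rightarrow> 'o dob \<Rightarrow> 'm dmor
                 \<Rightarrow> ('o, 'm) raw \<Rightarrow> ('o, 'm) raw" where
  "act_ty A (Var k) n \<Delta> a b f x =
     (case x of RVar h \<Rightarrow> RVar (ccomp A h (iota_mor n (n - Suc k) f)) | _ \<Rightarrow> x)"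
| "act_ty A (Abs P) n \<Delta> a b f x =
     (case (a, b, f) of
        (Arr as a1, Arr bs b1, MArr \<alpha> fs f1) \<Rightarrow>
           act_ty A P (Suc n) (\<Delta> @ [bs]) a1 b1 f1 (act_ctx A P a1 (map (sid A) \<Delta> @ [(\<alpha>, fs)]) x)
      | _ \<Rightarrow> x)"
| "act_ty A (App P Q) n \<Delta> a b f x =
     (case x of RApp bs Gs p qs h \<Rightarrow>
        RApp bs Gs (act_ty A P n (Gs ! 0) (Arr bs a) (Arr bs b) (MArr [0..<length bs] (map (did A) bs) f) p) qs h
      | _ \<Rightarrow> x)"

text \<open>Representatives of \<open>[[M]]_{x1..xn}(\<Delta>,a)\<close>. Variable with de Bruijn index k is
  \<open>x_{n-k}\<close> (the innermost binder is appended last to the list of variables).\<close>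
fun raw_den :: "('o, 'm) cat \<Rightarrow> fclass \<Rightarrow> dB \<Rightarrow> nat \<Rightarrow> 'o ctx \<Rightarrow> 'o dob \<Rightarrow> ('o, 'm) raw set" where
  "raw_den A C (Var k) n \<Delta> a =
     (if k < n then {RVar h | h. ctxhom A C n \<Delta> (iota n (n - Suc k) a) h} else {})"
| "raw_den A C (Abs P) n \<Delta> a =
     (case a of Atm _ \<Rightarrow> {} | Arr as b \<Rightarrow> raw_den A C P (Suc n) (\<Delta> @ [as]) b)"
| "raw_den A C (App P Q) n \<Delta> a =
     {RApp as Gs p qs h | as Gs p qs h.
        length Gs = Suc (length as) \<and> (\<forall>G\<in>set Gs. length G = n) \<and>
        p \<in> raw_den A C P n (Gs ! 0) (Arr as a) \<and>
        length qs = length as \<and> (\<forall>i<length as. qs ! i \<in> raw_den A C Q n (Gs ! Suc i) (as ! i)) \<and>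
        ctxhom A C n \<Delta> (ctens n Gs) h}"

text \<open>The equivalence on representatives whose quotient is the denotation. For an
  application it is generated by: equivalence of the components, and the dinaturality
  identifications of the coends over \<open>\<Gamma>_0..\<Gamma>_k \<in> (SD)^n\<close> and over \<open>\<vec>a \<in> SD\<close>.\<close>
fun eqv :: "('o, 'm) cat \<Rightarrow> fclass \<Rightarrow> dB \<Rightarrow> nat \<Rightarrow> 'o ctx \<Rightarrow> 'o dob
              \<Rightarrow> ('o, 'm) raw \<Rightarrow> ('o, 'm) raw \<Rightarrow> bool" where
  "eqv A C (Var k) n \<Delta> a = (\<lambda>x y. x = y)"
| "eqv A C (Abs P) n \<Delta> a =
     (case a of Atm _ \<Rightarrow> (\<lambda>x y. False) | Arr as b \<Rightarrow> eqv A C P (Suc n) (\<Delta> @ [as]) b)"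
| "eqv A C (App P Q) n \<Delta> a = equivclp (\<lambda>x y.
     x \<in> raw_den A C (App P Q) n \<Delta> a \<and> y \<in> raw_den A C (App P Q) n \<Delta> a \<and>
     ((\<exists>as Gs p p' qs qs' h. x = RApp as Gs p qs h \<and> y = RApp as Gs p' qs' h \<and>
          eqv A C P n (Gs ! 0) (Arr as a) p p' \<and> length qs = length qs' \<and>
          (\<forall>i<length qs. eqv A C Q n (Gs ! Suc i) (as ! i) (qs ! i) (qs' ! i)))
      \<or> (\<exists>as Gs Gs' gs p' qs' h. length Gs = Suc (length as) \<and> length Gs' = length Gs \<and>
          length gs = length Gs \<and> (\<forall>i<length Gs. ctxhom A C n (Gs ! i) (Gs' ! i) (gs ! i)) \<and>
          x = RApp as Gs (act_ctx A P (Arr as a) (gs ! 0) p')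
                (map (\<lambda>i. act_ctx A Q (as ! i) (gs ! Suc i) (qs' ! i)) [0..<length as]) h \<and>
          y = RApp as Gs' p' qs' (ccomp A h (ctens_mor n Gs gs)))
      \<or> (\<exists>as bs \<alpha> fs Gs p qs h. length Gs = Suc (length as) \<and> shom A C as bs (\<alpha>, fs) \<and>
          x = RApp as Gs (act_ty A P n (Gs ! 0) (Arr bs a) (Arr as a) (MArr \<alpha> fs (did A a)) p) qs h \<and>
          y = RApp bs (Gs ! 0 # map (\<lambda>j. Gs ! Suc (\<alpha> ! j)) [0..<length bs]) p
                (map (\<lambda>j. act_ty A Q n (Gs ! Suc (\<alpha> ! j)) (as ! (\<alpha> ! j)) (bs ! j) (fs ! j) (qs ! (\<alpha> ! j)))
                   [0..<length bs])
                (ccomp A h (sigma A n Gs \<alpha>)))))"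

definition den :: "('o, 'm) cat \<Rightarrow> fclass \<Rightarrow> dB \<Rightarrow> nat \<Rightarrow> 'o ctx \<Rightarrow> 'o dob \<Rightarrow> ('o, 'm) raw set set" where
  "den A C M n \<Delta> a = raw_den A C M n \<Delta> a //
      {(x, y). x \<in> raw_den A C M n \<Delta> a \<and> y \<in> raw_den A C M n \<Delta> a \<and> eqv A C M n \<Delta> a x y}"

end

theory Submission
  imports Defs "HOL-Combinatorics.Permutations"
begin

type_synonym 'o tctx = "nat \<Rightarrow> 'o dob multiset"

definition czero :: "'o tctx" where "czero = (\<lambda>j. {#})"
definition cadd :: "'o tctx \<Rightarrow> 'o tctx \<Rightarrow> 'o tctx" where "cadd G H = (\<lambda>j. G j + H j)"
definition csum :: "'o tctx list \<Rightarrow> 'o tctx" where "csum Gs = foldr cadd Gs czero"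
definition csing :: "nat \<Rightarrow> 'o dob \<Rightarrow> 'o tctx" where "csing k a = (\<lambda>j. if j = k then {#a#} else {#})"
definition ccons :: "'o dob multiset \<Rightarrow> 'o tctx \<Rightarrow> 'o tctx" where
  "ccons X G = (\<lambda>j. case j of 0 \<Rightarrow> X | Suc j' \<Rightarrow> G j')"
definition cremove :: "nat \<Rightarrow> 'o tctx \<Rightarrow> 'o tctx" where
  "cremove k G = (\<lambda>j. if j < k then G j else G (Suc j))"

lemma csum_app: "csum (xs @ ys) j = csum xs j + csum ys j"
  by (induct xs) (auto simp: csum_def cadd_def czero_def)
lemma csum_nil[simp]: "csum [] j = {#}" by (simp add: csum_def czero_def)
lemma csum_cons[simp]: "csum (G # Gs) j = G j + csum Gs j" by (simp add: csum_def cadd_def)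
lemma cadd_apply[simp]: "cadd G H j = G j + H j" by (simp add: cadd_def)
lemma csum_concat: "csum (concat Gss) j = sum_list (map (\<lambda>Gs. csum Gs j) Gss)"
  by (induct Gss) (auto simp: csum_app)
lemma csum_map: "csum Gs j = sum_list (map (\<lambda>G. G j) Gs)"
  by (induct Gs) auto

inductive TT :: "'o tctx \<Rightarrow> dB \<Rightarrow> 'o dob \<Rightarrow> bool" where
  TVar: "TT (csing k a) (Var k) a"
| TAbs: "TT (ccons (mset as) G) P b \<Longrightarrow> TT G (Abs P) (Arr as b)"
| TApp: "TT G0 P (Arr as a) \<Longrightarrow> length Gs = length as \<Longrightarrow> (\<forall>i<length as. TT (Gs ! i) Q (as ! i))
     \<Longrightarrow> TT (cadd G0 (csum Gs)) (App P Q) a"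

inductive_cases TT_VarE: "TT G (Var k) a"
inductive_cases TT_AbsE: "TT G (Abs P) a"
inductive_cases TT_AppE: "TT G (App P Q) a"

lemma choice_list: "\<forall>i<n. \<exists>x. P i x \<Longrightarrow> \<exists>xs. length xs = n \<and> (\<forall>i<n. P i (xs ! i))"
proof -
  assume h: "\<forall>i<n. \<exists>x. P i x"
  show ?thesis
    by (rule exI[of _ "map (\<lambda>i. SOME x. P i x) [0..<n]"]) (auto intro: someI_ex h[rule_format])
qed

lemma ccons_tl: "ccons (G 0) (\<lambda>j. G (Suc j)) = G"
  by (auto simp: ccons_def split: nat.split)

lemma TT_lift: "TT G (db_lift M k) a \<Longrightarrow> G k = {#} \<and> TT (cremove k G) M a"
proof (induct M arbitrary: G k a)
  case (Var i)
  then show ?case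
    apply (cases "i < k")
     apply (auto elim!: TT_VarE simp: csing_def)
    apply (rule back_subst[of "\<lambda>G. TT G _ _", OF TVar]; force simp: cremove_def csing_def)
    apply (rule back_subst[of "\<lambda>G. TT G _ _", OF TVar]; force simp: cremove_def csing_def)
    done
next
  case (App s t)
  from App.prems obtain G0 as Gs where G: "G = cadd G0 (csum Gs)" and p: "TT G0 (db_lift s k) (Arr as a)"
    and l: "length Gs = length as" and q: "\<forall>i<length as. TT (Gs ! i) (db_lift t k) (as ! i)"
    by (auto elim!: TT_AppE)
  from App.hyps(1)[OF p] have p': "G0 k = {#}" "TT (cremove k G0) s (Arr as a)" by auto
  from q App.hyps(2) have q': "\<forall>i<length as. (Gs ! i) k = {#} \<and> TT (cremove k (Gs ! i)) t (as ! i)" by blast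
  have "TT (cadd (cremove k G0) (csum (map (cremove k) Gs))) (App s t) a"
    by (rule TApp[OF p'(2)]) (use l q' in auto)
  moreover have "cadd (cremove k G0) (csum (map (cremove k) Gs)) = cremove k G"
    by (auto simp: G cremove_def csum_map o_def)
  moreover have "G k = {#}"
  proof -
    have "\<forall>G\<in>set Gs. G k = {#}" using q' l by (auto simp: in_set_conv_nth)
    then have "(\<Sum>G\<leftarrow>Gs. G k) = {#}" by (induct Gs) auto
    then show ?thesis using p' by (simp add: G csum_map)
  qed
  ultimately show ?case by simp
next
  case (Abs s)
  from Abs.prems obtain as b where a: "a = Arr as b" and h: "TT (ccons (mset as) G) (db_lift s (Suc k)) b"
    by (auto elim!: TT_AbsE)
  from Abs.hyps[OF h] have "G k = {#}" "TT (cremove (Suc k) (ccons (mset as) G)) s b"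
    by (auto simp: ccons_def)
  moreover have "cremove (Suc k) (ccons (mset as) G) = ccons (mset as) (cremove k G)"
    by (auto simp: cremove_def ccons_def split: nat.split)
  ultimately show ?case using a by (auto intro: TAbs)
qed

lemma ims: "image_mset f (\<Sum>i<(n::nat). g i) = (\<Sum>i<n. image_mset f (g i))"
  by (induct n) auto

definition SE :: "'o tctx \<Rightarrow> dB \<Rightarrow> dB \<Rightarrow> nat \<Rightarrow> 'o dob \<Rightarrow> bool" where
  "SE G M N k a \<longleftrightarrow> (\<exists>G' ps. TT G' M a \<and> G' k = mset (map snd ps) \<and>
      (\<forall>p\<in>set ps. TT (fst p) N (snd p)) \<and> G = cadd (cremove k G') (csum (map fst ps)))"

lemma TT_subst: "TT G (db_subst M N k) a \<Longrightarrow> SE G M N k a"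
proof (induct M arbitrary: G N k a)
  case (Var i)
  show ?case
  proof (cases "k < i")
    case True
    with Var have G: "G = csing (i - 1) a" by (auto elim!: TT_VarE)
    show ?thesis unfolding SE_def
      apply (rule exI[of _ "csing i a"], rule exI[of _ "[]"])
      apply (intro conjI TVar)
      using True by (auto simp: G csing_def cremove_def cadd_def csum_def czero_def intro!: ext)
  next
    case False
    show ?thesis
    proof (cases "i = k")
      case True
      with Var have N: "TT G N a" by simp
      show ?thesis unfolding SE_def
        apply (rule exI[of _ "csing i a"], rule exI[of _ "[(G,a)]"])
        apply (intro conjI TVar)
        using True N by (auto simp: csing_def cremove_def cadd_def csum_def czero_def intro!: ext)
    next
      case F2: False
      with False Var have G: "G = csing i a" by (auto elim!: TT_VarE)
      show ?thesis unfolding SE_def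
        apply (rule exI[of _ "csing i a"], rule exI[of _ "[]"])
        apply (intro conjI TVar)
        using False F2 by (auto simp: G csing_def cremove_def cadd_def csum_def czero_def intro!: ext)
    qed
  qed
next
  case (App s t)
  from App.prems obtain G0 bs Gq where G: "G = cadd G0 (csum Gq)" and p: "TT G0 (db_subst s N k) (Arr bs a)"
    and l: "length Gq = length bs" and q: "\<forall>i<length bs. TT (Gq ! i) (db_subst t N k) (bs ! i)"
    by (auto elim!: TT_AppE)
  from App.hyps(1)[OF p] obtain G0' ps0 where
    h0: "TT G0' s (Arr bs a)" "G0' k = mset (map snd ps0)"
        "\<forall>p\<in>set ps0. TT (fst p) N (snd p)" "G0 = cadd (cremove k G0') (csum (map fst ps0))"
    unfolding SE_def by blast
  have "\<forall>i<length bs. \<exists>x. (\<lambda>(G', ps). TT G' t (bs ! i) \<and> G' k = mset (map snd ps) \<and>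
      (\<forall>p\<in>set ps. TT (fst p) N (snd p)) \<and> Gq ! i = cadd (cremove k G') (csum (map fst ps))) x"
    using App.hyps(2) q unfolding SE_def by fastforce
  from choice_list[OF this] obtain xs where xs: "length xs = length bs"
    "\<forall>i<length bs. (\<lambda>(G', ps). TT G' t (bs ! i) \<and> G' k = mset (map snd ps) \<and>
      (\<forall>p\<in>set ps. TT (fst p) N (snd p)) \<and> Gq ! i = cadd (cremove k G') (csum (map fst ps))) (xs ! i)"
    by blast
  define Gt where "Gt = map fst xs"
  define pst where "pst = map snd xs"
  have xi: "\<And>i. i < length bs \<Longrightarrow> TT (Gt ! i) t (bs ! i) \<and> (Gt ! i) k = mset (map snd (pst ! i)) \<and>
     (\<forall>p\<in>set (pst ! i). TT (fst p) N (snd p)) \<and>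
     Gq ! i = cadd (cremove k (Gt ! i)) (csum (map fst (pst ! i)))"
    using xs by (simp add: Gt_def pst_def case_prod_beta)
  have lens: "length Gt = length bs" "length pst = length bs"
    using xs by (auto simp: Gt_def pst_def)
  have TTnew: "TT (cadd G0' (csum Gt)) (App s t) a"
    by (rule TApp[OF h0(1)]) (use lens xi in auto)
  have mm: "\<forall>p\<in>set (ps0 @ concat pst). TT (fst p) N (snd p)"
  proof
    fix p assume "p \<in> set (ps0 @ concat pst)"
    then consider "p \<in> set ps0" | x where "x \<in> set pst" "p \<in> set x" by auto
    then show "TT (fst p) N (snd p)"
    proof cases
      case 1 then show ?thesis using h0(3) by blast
    next
      case 2
      then obtain i where "i < length bs" "x = pst ! i" using lens by (auto simp: in_set_conv_nth)
      then show ?thesis using xi 2 by blast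
    qed
  qed
  have e1: "(\<Sum>i<length bs. f (Gt ! i)) = (\<Sum>i<length bs. g (pst ! i))"
    if "\<And>i. i < length bs \<Longrightarrow> f (Gt ! i) = g (pst ! i)" for f g
    using that by simp
  have sl: "sum_list (map h xs) = (\<Sum>i<length xs. h (xs ! i))" for h :: "_ \<Rightarrow> 'b::comm_monoid_add" and xs
    by (simp add: sum_list_sum_nth atLeast0LessThan)
  show ?case unfolding SE_def
    apply (rule exI[of _ "cadd G0' (csum Gt)"], rule exI[of _ "ps0 @ concat pst"])
    apply (intro conjI TTnew mm)
    subgoal
      using xi lens h0(2)
      by (simp add: csum_map sl mset_concat ims)
    apply (rule ext)
    subgoal for j
    proof -
      have Gq: "Gq = map (\<lambda>i. cadd (cremove k (Gt ! i)) (csum (map fst (pst ! i)))) [0..<length bs]"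
        using l by (intro nth_equalityI) (simp_all add: xi)
      have cr: "cremove k (cadd X Y) j = cremove k X j + cremove k Y j" for X Y
        by (simp add: cremove_def)
      have crs: "cremove k (csum Xs) j = csum (map (cremove k) Xs) j" for Xs
        by (induct Xs) (auto simp: cremove_def)
      have "G j = G0 j + (\<Sum>i\<leftarrow>[0..<length bs]. cremove k (Gt ! i) j + csum (map fst (pst ! i)) j)"
        by (subst G, subst Gq) (simp add: csum_map o_def)
      also have "\<dots> = G0 j + ((\<Sum>i\<leftarrow>[0..<length bs]. cremove k (Gt ! i) j) + (\<Sum>i\<leftarrow>[0..<length bs]. csum (map fst (pst ! i)) j))"
        by (simp only: sum_list_addf)
      also have "\<dots> = cadd (cremove k (cadd G0' (csum Gt))) (csum (map fst (ps0 @ concat pst))) j"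
      proof -
        have e1: "map (cremove k) Gt = map (\<lambda>i. cremove k (Gt ! i)) [0..<length bs]"
          using lens by (intro nth_equalityI) simp_all
        have e2: "map ((\<lambda>Gs. csum Gs j) \<circ> map fst) pst = map (\<lambda>i. csum (map fst (pst ! i)) j) [0..<length bs]"
          using lens by (intro nth_equalityI) simp_all
        show ?thesis
          by (simp add: h0(4) cr crs csum_app map_concat csum_concat) (simp only: e1 e2, simp only: csum_map map_map o_def)
      qed
      finally show ?thesis .
    qed
    done
next
  case (Abs s)
  from Abs.prems obtain bs b where a: "a = Arr bs b" and h: "TT (ccons (mset bs) G) (db_subst s (db_lift N 0) (Suc k)) b"
    by (auto elim!: TT_AbsE)
  from Abs.hyps[OF h] obtain G' ps where h1: "TT G' s b" "G' (Suc k) = mset (map snd ps)"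
    "\<forall>p\<in>set ps. TT (fst p) (db_lift N 0) (snd p)" "ccons (mset bs) G = cadd (cremove (Suc k) G') (csum (map fst ps))"
    unfolding SE_def by blast
  from h1(3) TT_lift have h2: "\<forall>p\<in>set ps. (fst p) 0 = {#} \<and> TT (cremove 0 (fst p)) N (snd p)" by blast
  have s0: "csum (map fst ps) 0 = {#}"
  proof -
    have "\<forall>G\<in>set (map fst ps). G 0 = {#}" using h2 by auto
    then have "(\<Sum>G\<leftarrow>map fst ps. G 0) = {#}" by (induct ps) auto
    then show ?thesis by (simp add: csum_map)
  qed
  have G'0: "G' 0 = mset bs" using fun_cong[OF h1(4), of 0] s0 by (simp add: ccons_def cremove_def)
  have "TT (\<lambda>j. G' (Suc j)) (Abs s) (Arr bs b)"
    by (rule TAbs) (simp add: G'0[symmetric] ccons_tl h1(1))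
  show ?case unfolding SE_def a
    apply (rule exI[of _ "\<lambda>j. G' (Suc j)"], rule exI[of _ "map (\<lambda>p. (cremove 0 (fst p), snd p)) ps"])
    apply (intro conjI)
    using \<open>TT (\<lambda>j. G' (Suc j)) (Abs s) (Arr bs b)\<close> apply simp
    using h1(2) apply (simp add: o_def)
    using h2 apply simp
    apply (rule ext)
    subgoal for j using fun_cong[OF h1(4), of "Suc j"]
      by (simp add: ccons_def cremove_def csum_map o_def)
    done
qed


lemma cadd_csum_nil: "cadd G (csum []) = G" by (auto intro!: ext)
declare cadd_apply[simp del]

lemma TT_expand: "beta M N \<Longrightarrow> TT G N a \<Longrightarrow> TT G M a"
proof (induct arbitrary: G a rule: beta.induct)
  case (beta_redex s t)
  from TT_subst[OF beta_redex] obtain G' ps where h: "TT G' s a" "G' 0 = mset (map snd ps)"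
    "\<forall>p\<in>set ps. TT (fst p) t (snd p)" "G = cadd (cremove 0 G') (csum (map fst ps))"
    unfolding SE_def by blast
  have "TT (\<lambda>j. G' (Suc j)) (Abs s) (Arr (map snd ps) a)"
  proof (rule TAbs)
    have "ccons (mset (map snd ps)) (\<lambda>j. G' (Suc j)) = G'" by (simp only: h(2)[symmetric] ccons_tl)
    then show "TT (ccons (mset (map snd ps)) (\<lambda>j. G' (Suc j))) s a" using h(1) by simp
  qed
  then have "TT (cadd (\<lambda>j. G' (Suc j)) (csum (map fst ps))) (App (Abs s) t) a"
    by (rule TApp) (use h(3) in auto)
  moreover have "cremove 0 G' = (\<lambda>j. G' (Suc j))" by (simp add: cremove_def)
  ultimately show ?case using h(4) by metis
next
  case (beta_appL s t u)
  from beta_appL.prems obtain G0 as Gs where "G = cadd G0 (csum Gs)" "TT G0 t (Arr as a)"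
    "length Gs = length as" "\<forall>i<length as. TT (Gs ! i) u (as ! i)" by (auto elim!: TT_AppE)
  then show ?case using beta_appL.hyps(2) by (auto intro: TApp)
next
  case (beta_appR s t u)
  from beta_appR.prems obtain G0 as Gs where "G = cadd G0 (csum Gs)" "TT G0 u (Arr as a)"
    "length Gs = length as" "\<forall>i<length as. TT (Gs ! i) t (as ! i)" by (auto elim!: TT_AppE)
  then show ?case using beta_appR.hyps(2) by (auto intro: TApp)
next
  case (beta_abs s t)
  from beta_abs.prems obtain as b where "a = Arr as b" "TT (ccons (mset as) G) t b"
    by (auto elim!: TT_AbsE)
  then show ?case using beta_abs.hyps(2) by (auto intro: TAbs)
qed

lemma TT_expand_star: "beta\<^sup>*\<^sup>* M N \<Longrightarrow> TT G N a \<Longrightarrow> TT G M a"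
  by (induct rule: converse_rtranclp_induct) (auto intro: TT_expand)

lemma closed_lift: "closedn k s \<Longrightarrow> closedn (Suc k) (db_lift s j)"
  by (induct s arbitrary: k j) auto

lemma closed_subst: "closedn (Suc k) t \<Longrightarrow> closedn k s \<Longrightarrow> j \<le> k \<Longrightarrow> closedn k (db_subst t s j)"
  by (induct t arbitrary: k s j) (auto simp: closed_lift)

lemma closed_beta: "beta M N \<Longrightarrow> closedn k M \<Longrightarrow> closedn k N"
  by (induct arbitrary: k rule: beta.induct) (auto simp: closed_subst)

lemma closed_beta_star: "beta\<^sup>*\<^sup>* M N \<Longrightarrow> closedn k M \<Longrightarrow> closedn k N"
  by (induct rule: rtranclp_induct) (auto intro: closed_beta)

lemma closed_Abs_pow: "closedn k ((Abs ^^ m) P) = closedn (k + m) P"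
  by (induct m arbitrary: k) auto

lemma closed_foldl: "closedn k (foldl App P Qs) \<Longrightarrow> closedn k P"
  by (induct Qs arbitrary: P) (simp, metis closedn.simps(2) foldl_Cons)

fun arrT :: "nat \<Rightarrow> 'o dob \<Rightarrow> 'o dob" where
  "arrT 0 b = b"
| "arrT (Suc p) b = Arr [] (arrT p b)"

lemma TT_foldl: "TT G P (arrT (length Qs) b) \<Longrightarrow> TT G (foldl App P Qs) b"
proof (induct Qs arbitrary: P)
  case (Cons Q Qs)
  have "TT (cadd G (csum [])) (App P Q) (arrT (length Qs) b)"
    by (rule TApp) (use Cons.prems in auto)
  then show ?case using Cons.hyps by (simp add: cadd_csum_nil)
qed simp

definition lst :: "'a multiset \<Rightarrow> 'a list" where "lst X = (SOME xs. mset xs = X)"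
lemma mset_lst[simp]: "mset (lst X) = X"
  unfolding lst_def by (rule someI_ex[OF ex_mset])

lemma TT_Abs_pow: "TT G P b \<Longrightarrow> \<exists>b'. TT (\<lambda>j. G (j + m)) ((Abs ^^ m) P) b'"
proof (induct m)
  case 0 then show ?case by auto
next
  case (Suc m)
  then obtain b' where h: "TT (\<lambda>j. G (j + m)) ((Abs ^^ m) P) b'" by blast
  have "TT (\<lambda>j. G (j + Suc m)) (Abs ((Abs ^^ m) P)) (Arr (lst (G m)) b')"
  proof (rule TAbs)
    have "ccons (mset (lst (G m))) (\<lambda>j. G (j + Suc m)) = (\<lambda>j. G (j + m))"
      by (auto simp: ccons_def split: nat.split intro!: ext)
    then show "TT (ccons (mset (lst (G m))) (\<lambda>j. G (j + Suc m))) ((Abs ^^ m) P) b'" using h by simp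
  qed
  then show ?case by auto
qed


lemma dhom_did: "is_category A \<Longrightarrow> dhom A C a a (did A a)"
proof (induct a)
  case (Atm x)
  then show ?case by (auto intro!: dhom_at simp: is_category_def)
next
  case (Arr as b)
  have ic: "inclass C (length as) [0..<length as]"
    by (cases C) (auto simp: inclass_def)
  show ?case
    by (simp, rule dhom_arr) (use Arr ic in auto)
qed

lemma shom_perm:
  assumes "is_category A" "mset xs = mset ys"
  shows "\<exists>m. shom A C xs ys m"
proof -
  from assms(2) obtain p where p: "p permutes {..<length xs}" "permute_list p xs = ys"
    by (metis mset_eq_permutation)
  have len: "length ys = length xs" using p(2) by auto
  have nth: "i < length ys \<Longrightarrow> ys ! i = xs ! p i" for i
    using p len permute_list_nth by metis
  have im: "p ` {..<length xs} = {..<length xs}" using permutes_image[OF p(1)] .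
  have inj: "inj_on p {..<length xs}" using p(1) permutes_inj_on by blast
  have ic: "inclass C (length xs) (map p [0..<length ys])"
  proof -
    have s: "set (map p [0..<length ys]) = {..<length xs}" using im len by (auto simp: atLeast0LessThan)
    have d: "distinct (map p [0..<length ys])" using inj len
      by (simp add: distinct_map atLeast0LessThan)
    show ?thesis using s d by (cases C) (auto simp: inclass_def)
  qed
  show ?thesis
    apply (rule exI[of _ "(map p [0..<length ys], map (\<lambda>i. did A (ys ! i)) [0..<length ys])"])
    unfolding shom_def using ic nth dhom_did[OF assms(1)] by auto
qed

lemma ctxhom_perm:
  assumes "is_category A" "length D = n" "length E = n" "\<forall>l<n. mset (D ! l) = mset (E ! l)"
  shows "\<exists>h. ctxhom A C n D E h"
proof -
  have "\<forall>l<n. \<exists>m. shom A C (D ! l) (E ! l) m" using shom_perm[OF assms(1)] assms(4) by blast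
  from choice_list[OF this] obtain h where "length h = n" "\<forall>l<n. shom A C (D ! l) (E ! l) (h ! l)" by blast
  then show ?thesis using assms unfolding ctxhom_def by blast
qed

definition toctx :: "nat \<Rightarrow> 'o tctx \<Rightarrow> 'o ctx" where
  "toctx n G = map (\<lambda>l. lst (G (n - Suc l))) [0..<n]"

lemma sum_list_zero_iff: "(sum_list (xs :: 'a multiset list) = {#}) = (\<forall>x\<in>set xs. x = {#})"
  by (induct xs) auto

lemma sound:
  assumes cat: "is_category A"
  shows "TT G M a \<Longrightarrow> \<forall>j\<ge>n. G j = {#} \<Longrightarrow> length D = n \<Longrightarrow> (\<forall>l<n. mset (D ! l) = G (n - Suc l))
    \<Longrightarrow> raw_den A C M n D a \<noteq> {}"
proof (induct arbitrary: n D rule: TT.induct)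
  case (TVar k a)
  have kn: "k < n" using TVar(1)[rule_format, of k] by (cases "k < n") (auto simp: csing_def)
  have "\<forall>l<n. mset (D ! l) = mset (iota n (n - Suc k) a ! l)"
    using TVar(3) kn by (auto simp: iota_def csing_def)
  then obtain h where "ctxhom A C n D (iota n (n - Suc k) a) h"
    using ctxhom_perm[OF cat, of D n "iota n (n - Suc k) a"] TVar(2) by (auto simp: iota_def)
  then show ?case using kn by auto
next
  case (TAbs as G P b)
  have "raw_den A C P (Suc n) (D @ [as]) b \<noteq> {}"
  proof (rule TAbs(2))
    show "\<forall>j\<ge>Suc n. ccons (mset as) G j = {#}" using TAbs(3) by (auto simp: ccons_def split: nat.split)
    show "length (D @ [as]) = Suc n" using TAbs(4) by simp
    show "\<forall>l<Suc n. mset ((D @ [as]) ! l) = ccons (mset as) G (Suc n - Suc l)"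
    proof (intro allI impI)
      fix l assume "l < Suc n"
      then consider "l < n" | "l = n" by linarith
      then show "mset ((D @ [as]) ! l) = ccons (mset as) G (Suc n - Suc l)"
      proof cases
        case 1
        then have "Suc n - Suc l = Suc (n - Suc l)" by simp
        then show ?thesis using 1 TAbs(4,5) by (simp add: nth_append ccons_def)
      qed (use TAbs(4) in \<open>simp add: ccons_def nth_append\<close>)
    qed
  qed
  then show ?case by simp
next
  case (TApp G0 P as a Gs Q)
  have z: "G0 j = {#} \<and> (\<forall>i<length Gs. (Gs ! i) j = {#})" if "j \<ge> n" for j
    using TApp(5) that by (auto simp: cadd_apply csum_map sum_list_zero_iff)
  have "raw_den A C P n (toctx n G0) (Arr as a) \<noteq> {}"
    by (rule TApp(2)) (use z in \<open>auto simp: toctx_def\<close>)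
  then obtain p where p: "p \<in> raw_den A C P n (toctx n G0) (Arr as a)" by blast
  have "\<forall>i<length as. \<exists>q. q \<in> raw_den A C Q n (toctx n (Gs ! i)) (as ! i)"
  proof (intro allI impI)
    fix i assume i: "i < length as"
    have "raw_den A C Q n (toctx n (Gs ! i)) (as ! i) \<noteq> {}"
    proof -
      have "\<forall>j\<ge>n. (Gs ! i) j = {#}" using z i TApp(3) by auto
      then show ?thesis using TApp(4) i by (auto simp: toctx_def)
    qed
    then show "\<exists>q. q \<in> raw_den A C Q n (toctx n (Gs ! i)) (as ! i)" by blast
  qed
  from choice_list[OF this] obtain qs where qs: "length qs = length as"
    "\<forall>i<length as. qs ! i \<in> raw_den A C Q n (toctx n (Gs ! i)) (as ! i)" by blast
  define Ls where "Ls = toctx n G0 # map (toctx n) Gs"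
  have "\<forall>l<n. mset (D ! l) = mset (ctens n Ls ! l)"
  proof (intro allI impI)
    fix l assume l: "l < n"
    have mc: "mset (concat xss) = sum_list (map mset xss)" for xss :: "'x list list"
      by (induct xss) auto
    have "mset (ctens n Ls ! l) = G0 (n - Suc l) + (\<Sum>H\<leftarrow>Gs. H (n - Suc l))"
      using l by (simp add: ctens_def Ls_def toctx_def mc o_def)
    then show "mset (D ! l) = mset (ctens n Ls ! l)"
      using TApp(7) l by (simp add: cadd_apply csum_map)
  qed
  then obtain h where h: "ctxhom A C n D (ctens n Ls) h"
    using ctxhom_perm[OF cat, of D n "ctens n Ls"] TApp(6) by (auto simp: ctens_def)
  have "RApp as Ls p qs h \<in> raw_den A C (App P Q) n D a"
    using p qs h TApp(3) by (auto simp: Ls_def toctx_def)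
  then show ?case by blast
qed

theorem corollary1:
  fixes A :: "('o, 'm) cat" and C :: fclass and M :: dB and n :: nat
  assumes "is_category A"
    and "closedn n M"
    and "head_normalizable M"
  shows "\<exists>\<Delta> a. length \<Delta> = n \<and> den A C M n \<Delta> a \<noteq> {}"
proof -
  from assms(3) obtain N where N: "beta\<^sup>*\<^sup>* M N" "is_hnf N" unfolding head_normalizable_def by blast
  from N(2) obtain m i Qs where Ne: "N = (Abs ^^ m) (foldl App (Var i) Qs)" unfolding is_hnf_def by blast
  have "closedn n N" using closed_beta_star N(1) assms(2) by blast
  then have "closedn (n + m) (Var i)" using Ne closed_Abs_pow closed_foldl by metis
  then have im: "i < n + m" by simp
  define c :: "'o dob" where "c = arrT (length Qs) (Atm undefined)"
  have "TT (csing i c) (foldl App (Var i) Qs) (Atm undefined)"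
    by (rule TT_foldl) (simp add: c_def[symmetric] TVar)
  from TT_Abs_pow[OF this, of m] obtain b where "TT (\<lambda>j. csing i c (j + m)) N b" using Ne by auto
  then have TM: "TT (\<lambda>j. csing i c (j + m)) M b" using TT_expand_star N(1) by blast
  have sup: "\<forall>j\<ge>n. (\<lambda>j. csing i c (j + m)) j = {#}" using im by (auto simp: csing_def)
  have "raw_den A C M n (toctx n (\<lambda>j. csing i c (j + m))) b \<noteq> {}"
    by (rule sound[OF assms(1) TM sup]) (auto simp: toctx_def)
  then have "den A C M n (toctx n (\<lambda>j. csing i c (j + m))) b \<noteq> {}"
    unfolding den_def quotient_def by blast
  moreover have "length (toctx n (\<lambda>j. csing i c (j + m))) = n" by (simp add: toctx_def)
  ultimately show ?thesis by blast
qed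

end
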